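(* Assume $a_{j,j+1}\neq0$ for all $1\le j\le d-1$. Let $2\le i\le d$, let $\omega\subset\mathbb Z^i$ be an orbit of the map $\mathbf l\mapsto\mathbf lA_i^T$ containing some $\mathbf l$ with last coordinate $l_i\ne0$, fix $\mathbf l^{(0)}\in\omega$ and set $\mathbf l^{(k)}=\mathbf l^{(0)}(A_i^T)^k$ for $k\in\mathbb Z$. Let $$\Psi_i^\perp(\mathbf y)=\sum_{\mathbf l\in\omega}c_{\mathbf l}\,e(\mathbf l\cdot\mathbf y),\qquad \mathbf y\in\mathbb T^i,$$ with only finitely many nonzero $c_{\mathbf l}\in\mathbb C$, and let $N\in\mathbb N$ be such that $c_{\mathbf l^{(n)}}=0$ for all $|n|\ge N$. Then $\Psi_i^\perp$ is a smooth coboundary for $T_i$ (i.e. $\Psi_i^\perp=u\circ T_i-u$ for some $C^\infty$ $u:\mathbb T^i\to\mathbb C$) if and only if $$\sum_{k=1}^{N}c_{\mathbf l^{(k)}}\,e\Big(-\sum_{j=0}^{k-1}\mathbf l^{(j)}\cdot\mathbf b_i\Big)+c_{\mathbf l^{(0)}}+\sum_{k=1}^{N-1}c_{\mathbf l^{(-k)}}\,e\Big(\sum_{j=1}^{k}\mathbf l^{(-j)}\cdot\mathbf b_i\Big)=0.$$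
   Context: $e(x)=\exp(2\pi i x)$. Let $d\ge2$, $A=(a_{l,m})$ a $d\times d$ upper triangular unipotent integer matrix, $\mathbf b\in\mathbb T^d$, $T\mathbf x=\mathbf xA+\mathbf b$ on $\mathbb T^d$ uniquely ergodic. For $1\le i\le d$, $A_i=(a_{l,m})_{1\le l,m\le i}$, $\mathbf b_i=(b_1,\dots,b_i)$, and $T_i\mathbf y=\mathbf yA_i+\mathbf b_i$ on $\mathbb T^i$ (row vectors); $A_i^T$ is the transpose of $A_i$. Note the last coordinate $l_i$ is constant along each orbit $\omega$. *)

theory Defs
  imports "HOL-Probability.Probability"
begin

text \<open>Indices are 0-based: coordinate m (0 \<le> m < i) stands for the
paper's coordinate m+1. A d x d integer matrix is a function A :: nat \<Rightarrow> nat \<Rightarrow> int,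
entry A l m for l, m < d. Real row vectors of R^i are functions nat \<Rightarrow> real, of which
only the coordinates below i matter; integer frequency vectors of Z^i are functions
nat \<Rightarrow> int vanishing at all coordinates \<ge> i.\<close>

definition e :: "real \<Rightarrow> complex" where
  "e x = exp (2 * pi * \<i> * complex_of_real x)"

definition upper_unipotent :: "nat \<Rightarrow> (nat \<Rightarrow> nat \<Rightarrow> int) \<Rightarrow> bool" where
  "upper_unipotent d A \<longleftrightarrow> (\<forall>l<d. A l l = 1) \<and> (\<forall>l<d. \<forall>m<l. A l m = 0)"

definition Tlift :: "nat \<Rightarrow> (nat \<Rightarrow> nat \<Rightarrow> int) \<Rightarrow> (nat \<Rightarrow> real) \<Rightarrow> (nat \<Rightarrow> real) \<Rightarrow> (nat \<Rightarrow> real)" where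
  "Tlift i A b y = (\<lambda>m. if m < i then (\<Sum>l<i. y l * of_int (A l m)) + b m else y m)"

text \<open>The torus T^d, represented by the fundamental domain [0,1)^d (other coordinates 0),
with its Borel sigma-algebra, and the map T acting on it (reduction mod 1).\<close>
definition torus_pts :: "nat \<Rightarrow> (nat \<Rightarrow> real) set" where
  "torus_pts d = {x. (\<forall>m<d. 0 \<le> x m \<and> x m < 1) \<and> (\<forall>m\<ge>d. x m = 0)}"

definition Ttorus :: "nat \<Rightarrow> (nat \<Rightarrow> nat \<Rightarrow> int) \<Rightarrow> (nat \<Rightarrow> real) \<Rightarrow> (nat \<Rightarrow> real) \<Rightarrow> (nat \<Rightarrow> real)" where
  "Ttorus d A b x = (\<lambda>m. if m < d then frac ((\<Sum>l<d. x l * of_int (A l m)) + b m) else 0)"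

definition torus_borel :: "nat \<Rightarrow> (nat \<Rightarrow> real) measure" where
  "torus_borel d = restrict_space borel (torus_pts d)"

definition invariant_prob :: "nat \<Rightarrow> (nat \<Rightarrow> nat \<Rightarrow> int) \<Rightarrow> (nat \<Rightarrow> real) \<Rightarrow> (nat \<Rightarrow> real) measure \<Rightarrow> bool" where
  "invariant_prob d A b M \<longleftrightarrow>
     sets M = sets (torus_borel d) \<and> prob_space M \<and>
     Ttorus d A b \<in> M \<rightarrow>\<^sub>M M \<and>
     (\<forall>S\<in>sets M. emeasure M (Ttorus d A b -` S \<inter> space M) = emeasure M S)"

definition uniquely_ergodic :: "nat \<Rightarrow> (nat \<Rightarrow> nat \<Rightarrow> int) \<Rightarrow> (nat \<Rightarrow> real) \<Rightarrow> bool" where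
  "uniquely_ergodic d A b \<longleftrightarrow> (\<exists>!M. invariant_prob d A b M)"

definition torus_fun :: "nat \<Rightarrow> ((nat \<Rightarrow> real) \<Rightarrow> complex) \<Rightarrow> bool" where
  "torus_fun i u \<longleftrightarrow>
     (\<forall>x x'. (\<forall>j<i. x j = x' j) \<longrightarrow> u x = u x') \<and>
     (\<forall>x j. j < i \<longrightarrow> u (x(j := x j + 1)) = u x)"

definition pdiff :: "nat \<Rightarrow> ((nat \<Rightarrow> real) \<Rightarrow> complex) \<Rightarrow> (nat \<Rightarrow> real) \<Rightarrow> complex" where
  "pdiff j f = (\<lambda>x. vector_derivative (\<lambda>t. f (x(j := t))) (at (x j)))"

fun iter_pdiff :: "nat list \<Rightarrow> ((nat \<Rightarrow> real) \<Rightarrow> complex) \<Rightarrow> (nat \<Rightarrow> real) \<Rightarrow> complex" where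
  "iter_pdiff [] f = f"
| "iter_pdiff (j # js) f = pdiff j (iter_pdiff js f)"

definition smooth_in :: "nat \<Rightarrow> ((nat \<Rightarrow> real) \<Rightarrow> complex) \<Rightarrow> bool" where
  "smooth_in i u \<longleftrightarrow>
     (\<forall>js. set js \<subseteq> {..<i} \<longrightarrow>
        continuous_on UNIV (iter_pdiff js u) \<and>
        (\<forall>j<i. \<forall>x. (\<lambda>t. iter_pdiff js u (x(j := t))) differentiable (at (x j))))"

definition smooth_coboundary :: "nat \<Rightarrow> (nat \<Rightarrow> nat \<Rightarrow> int) \<Rightarrow> (nat \<Rightarrow> real) \<Rightarrow> ((nat \<Rightarrow> real) \<Rightarrow> complex) \<Rightarrow> bool" where
  "smooth_coboundary i A b \<Psi> \<longleftrightarrow>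
     (\<exists>u. torus_fun i u \<and> smooth_in i u \<and> (\<forall>y. \<Psi> y = u (Tlift i A b y) - u y))"

definition supp_in :: "nat \<Rightarrow> (nat \<Rightarrow> int) \<Rightarrow> bool" where
  "supp_in i l \<longleftrightarrow> (\<forall>m\<ge>i. l m = 0)"

definition Mstep :: "nat \<Rightarrow> (nat \<Rightarrow> nat \<Rightarrow> int) \<Rightarrow> (nat \<Rightarrow> int) \<Rightarrow> (nat \<Rightarrow> int)" where
  "Mstep i A l = (\<lambda>m. if m < i then (\<Sum>n<i. l n * A m n) else 0)"

definition orb :: "nat \<Rightarrow> (nat \<Rightarrow> nat \<Rightarrow> int) \<Rightarrow> (nat \<Rightarrow> int) \<Rightarrow> int \<Rightarrow> (nat \<Rightarrow> int)" where
  "orb i A l0 k = (if 0 \<le> k then (Mstep i A ^^ nat k) l0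
                   else (THE l. supp_in i l \<and> (Mstep i A ^^ nat (- k)) l = l0))"

definition dotr :: "nat \<Rightarrow> (nat \<Rightarrow> int) \<Rightarrow> (nat \<Rightarrow> real) \<Rightarrow> real" where
  "dotr i l y = (\<Sum>m<i. of_int (l m) * y m)"

end

theory Submission
  imports Defs
begin


lemma e_add: "e (a + b) = e a * e b"
  unfolding e_def by (simp add: distrib_left exp_add)

lemma e_zero[simp]: "e 0 = 1" unfolding e_def by simp

lemma norm_e[simp]: "norm (e x) = 1"
  unfolding e_def by (simp add: norm_exp_eq_Re)

lemma e_int: "e (of_int k) = 1"
proof -
  have "e (of_int k) = exp (\<i> * (of_int k * (of_real pi * 2)))"
    unfolding e_def by (simp add: algebra_simps)
  also have "\<dots> = exp (0 + \<i> * (of_int k * (of_real pi * 2)))" by simp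
  also have "\<dots> = 1" by (subst exp_plus_2pin) simp
  finally show ?thesis .
qed

lemma e_minus: "e (- x) * e x = 1"
  using e_add[of "-x" x] by simp

lemma e_half: "e (x + 1/2) = - e x"
proof -
  have "e (1/2) = exp (pi * \<i>)" unfolding e_def by (simp add: algebra_simps)
  also have "\<dots> = -1" by (simp add: exp_pi_i')
  finally show ?thesis by (simp add: e_add)
qed

lemma cont_e[continuous_intros]: "continuous_on S f \<Longrightarrow> continuous_on S (\<lambda>x. e (f x))"
  unfolding e_def by (intro continuous_intros)

fun iint :: "nat \<Rightarrow> ((nat \<Rightarrow> real) \<Rightarrow> complex) \<Rightarrow> (nat \<Rightarrow> real) \<Rightarrow> complex" where
  "iint 0 g = g"
| "iint (Suc n) g = iint n (\<lambda>x. integral {0..1} (\<lambda>t. g (x(n := t))))"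

lemma cont_upd: "continuous_on UNIV (\<lambda>p::(nat\<Rightarrow>real)\<times>real. (fst p)(n := snd p))"
proof (rule continuous_on_coordinatewise_then_product)
  fix m
  show "continuous_on UNIV (\<lambda>p::(nat\<Rightarrow>real)\<times>real. ((fst p)(n := snd p)) m)"
  proof (cases "m = n")
    case True then show ?thesis by (simp add: continuous_on_snd)
  next
    case False
    have "continuous_on UNIV (\<lambda>p::(nat\<Rightarrow>real)\<times>real. fst p m)"
      using continuous_on_compose2[OF continuous_on_product_coordinates[of m] continuous_on_fst[OF continuous_on_id]]
      by auto
    with False show ?thesis by simp
  qed
qed

lemma cont_upd_comp:
  assumes "continuous_on UNIV g"
  shows "continuous_on S (\<lambda>p::(nat\<Rightarrow>real)\<times>real. g ((fst p)(n := snd p)))"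
  using continuous_on_compose2[OF assms cont_upd] continuous_on_subset by blast

lemma cont_upd_t:
  assumes "continuous_on UNIV (g::(nat\<Rightarrow>real) \<Rightarrow> complex)"
  shows "continuous_on S (\<lambda>t. g (x(n := t)))"
proof -
  have "continuous_on UNIV (\<lambda>t::real. (x, t))" by (intro continuous_intros)
  from continuous_on_compose2[OF cont_upd_comp[OF assms, of UNIV n] this]
  show ?thesis using continuous_on_subset by fastforce
qed

lemma param_cont:
  assumes "continuous_on UNIV (g::(nat\<Rightarrow>real) \<Rightarrow> complex)"
  shows "continuous_on UNIV (\<lambda>x. integral {0..1} (\<lambda>t. g (x(n := t))))"
proof -
  have "continuous_on (UNIV \<times> cbox 0 (1::real)) (\<lambda>(x, t). g (x(n := t)))"
    using cont_upd_comp[OF assms, of "UNIV \<times> cbox 0 1" n] by (simp add: case_prod_beta)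
  from integral_continuous_on_param[OF this] show ?thesis by simp
qed

lemma iint_cont: "continuous_on UNIV g \<Longrightarrow> continuous_on UNIV (iint n g)"
  by (induction n arbitrary: g) (auto intro: param_cont)

lemma iint_add:
  assumes "continuous_on UNIV f" "continuous_on UNIV g"
  shows "iint n (\<lambda>x. f x + g x) = (\<lambda>x. iint n f x + iint n g x)"
  using assms
proof (induction n arbitrary: f g)
  case 0 then show ?case by simp
next
  case (Suc n)
  have "(\<lambda>x. integral {0..1} (\<lambda>t. f (x(n := t)) + g (x(n := t))))
      = (\<lambda>x. integral {0..1} (\<lambda>t. f (x(n := t))) + integral {0..1} (\<lambda>t. g (x(n := t))))"
    by (intro ext integral_add integrable_continuous_interval cont_upd_t Suc.prems)
  then have "iint (Suc n) (\<lambda>x. f x + g x) = iint n (\<lambda>x. integral {0..1} (\<lambda>t. f (x(n := t))) + integral {0..1} (\<lambda>t. g (x(n := t))))"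
    by (simp only: iint.simps)
  also have "\<dots> = (\<lambda>x. iint (Suc n) f x + iint (Suc n) g x)"
    by (simp only: iint.simps Suc.IH[OF param_cont[OF Suc.prems(1)] param_cont[OF Suc.prems(2)]])
  finally show ?case .
qed

lemma iint_cmult: "iint n (\<lambda>x. c * g x) = (\<lambda>x. c * iint n g x)"
proof (induction n arbitrary: g)
  case 0 then show ?case by simp
next
  case (Suc n)
  then show ?case by simp
qed

lemma iint_diff:
  assumes "continuous_on UNIV f" "continuous_on UNIV g"
  shows "iint n (\<lambda>x. f x - g x) = (\<lambda>x. iint n f x - iint n g x)"
proof -
  have "continuous_on UNIV (\<lambda>x. (-1) * g x)" by (intro continuous_intros assms)
  from iint_add[OF assms(1) this, of n] show ?thesis using iint_cmult[of n "-1" g] by simp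
qed

lemma iint_sum:
  assumes "finite K" "\<And>k. k \<in> K \<Longrightarrow> continuous_on UNIV (f k)"
  shows "iint n (\<lambda>x. \<Sum>k\<in>K. f k x) = (\<lambda>x. \<Sum>k\<in>K. iint n (f k) x)"
  using assms
proof (induction K rule: finite_induct)
  case empty
  have "iint n (\<lambda>x. 0 * 0) = (\<lambda>x. 0 * iint n (\<lambda>x. 0) x)" by (rule iint_cmult)
  then show ?case by simp
next
  case (insert k K)
  have c: "continuous_on UNIV (\<lambda>x. \<Sum>k\<in>K. f k x)"
    by (intro continuous_on_sum) (use insert in auto)
  show ?case using insert iint_add[OF _ c, of "f k" n] by simp
qed

lemma iint_bound:
  assumes "continuous_on UNIV g" "\<And>x. norm (g x) \<le> B"
  shows "norm (iint n g x) \<le> B"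
  using assms
proof (induction n arbitrary: g)
  case 0 then show ?case by simp
next
  case (Suc n)
  have b: "norm (integral {0..1} (\<lambda>t. g (x(n := t)))) \<le> B" for x
    using integral_bound[of 0 1 "\<lambda>t. g (x(n := t))" B] cont_upd_t[OF Suc.prems(1)] Suc.prems(2)
    by auto
  show ?case unfolding iint.simps by (rule Suc.IH[OF param_cont[OF Suc.prems(1)] b])
qed

lemma per_int:
  assumes "\<And>t. f (t + 1) = f t"
  shows "f (t + of_int k) = f t"
proof (induction k arbitrary: t rule: int_induct[where k=0])
  case base then show ?case by simp
next
  case (step1 i) then show ?case using assms[of "t + of_int i"] by (simp add: add.assoc)
next
  case (step2 i) then show ?case using assms[of "t + of_int (i - 1)"] by (simp add: add.assoc)
qed

lemma per_shift:
  fixes f :: "real \<Rightarrow> complex"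
  assumes cf: "continuous_on UNIV f" and per: "\<And>t. f (t + 1) = f t"
  shows "integral {0..1} (\<lambda>t. f (t + c)) = integral {0..1} f"
proof -
  define c' where "c' = frac c"
  have c': "0 \<le> c'" "c' < 1" unfolding c'_def by (auto simp: frac_lt_1)
  have "f (t + c) = f (t + c') " for t
    using per_int[of f "t + c'" "\<lfloor>c\<rfloor>", OF per] unfolding c'_def frac_def by (simp add: algebra_simps)
  then have "integral {0..1} (\<lambda>t. f (t + c)) = integral {0..1} (f \<circ> (+) c')"
    by (simp add: o_def add.commute)
  also have "\<dots> = integral {c'..1+c'} f" using integral_shift_Icc_real[of 0 1 f c'] by simp
  also have "\<dots> = integral {c'..1} f + integral {1..1+c'} f"
    by (rule Henstock_Kurzweil_Integration.integral_combine[symmetric]) (use c' in \<open>auto intro!: integrable_continuous_interval continuous_on_subset[OF cf]\<close>)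
  also have "integral {1..1+c'} f = integral {0..c'} (f \<circ> (+) 1)"
    using integral_shift_Icc_real[of 0 c' f 1] by (simp add: add.commute)
  also have "f \<circ> (+) 1 = f" using per by (auto simp: add.commute)
  also have "integral {c'..1} f + integral {0..c'} f = integral {0..1} f"
    using c' by (subst add.commute, intro Henstock_Kurzweil_Integration.integral_combine integrable_continuous_interval continuous_on_subset[OF cf]) auto
  finally show ?thesis .
qed


definition Sh :: "nat \<Rightarrow> (nat \<Rightarrow> nat \<Rightarrow> real) \<Rightarrow> (nat \<Rightarrow> real) \<Rightarrow> (nat \<Rightarrow> real) \<Rightarrow> (nat \<Rightarrow> real)" where
  "Sh n M s y = (\<lambda>m. if m < n then y m + (\<Sum>l<m. y l * M l m) + s m else y m)"

lemma Sh_Suc_upd: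
  "Sh (Suc n) M s (x(n := t)) = (Sh n M s x)(n := t + ((\<Sum>l<n. x l * M l n) + s n))"
  unfolding Sh_def by (auto intro!: ext sum.cong)

lemma iint_shear:
  assumes "continuous_on UNIV g" "\<And>x m. m < n \<Longrightarrow> g (x(m := x m + 1)) = g x"
  shows "iint n (\<lambda>y. g (Sh n M s y)) = iint n g"
  using assms
proof (induction n arbitrary: g)
  case 0 then show ?case by (simp add: Sh_def)
next
  case (Suc n)
  define G where "G z = integral {0..1} (\<lambda>t. g (z(n := t)))" for z
  have inner: "integral {0..1} (\<lambda>t. g (Sh (Suc n) M s (x(n := t)))) = G (Sh n M s x)" for x
  proof -
    define z where "z = Sh n M s x"
    define c where "c = (\<Sum>l<n. x l * M l n) + s n"
    have "integral {0..1} (\<lambda>t. g (Sh (Suc n) M s (x(n := t)))) = integral {0..1} (\<lambda>t. (\<lambda>t. g (z(n:=t))) (t + c))"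
      by (simp add: Sh_Suc_upd z_def c_def)
    also have "\<dots> = integral {0..1} (\<lambda>t. g (z(n:=t)))"
    proof (rule per_shift)
      show "continuous_on UNIV (\<lambda>t. g (z(n := t)))" by (rule cont_upd_t[OF Suc.prems(1)])
      fix t
      show "g (z(n := t + 1)) = g (z(n := t))"
        using Suc.prems(2)[of n "z(n:=t)"] by (simp only: fun_upd_same fun_upd_upd)
    qed
    finally show ?thesis unfolding G_def z_def .
  qed
  have Gc: "continuous_on UNIV G" unfolding G_def by (rule param_cont[OF Suc.prems(1)])
  have Gp: "G (x(m := x m + 1)) = G x" if "m < n" for x m
  proof -
    have "g ((x(m := x m + 1))(n := t)) = g (x(n := t))" for t
    proof -
      have "(x(m := x m + 1))(n := t) = (x(n:=t))(m := (x(n:=t)) m + 1)"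
        using that by (auto intro!: ext)
      then show ?thesis using Suc.prems(2)[of m "x(n:=t)"] that by (simp only:)
    qed
    then show ?thesis unfolding G_def by simp
  qed
  have "iint (Suc n) (\<lambda>y. g (Sh (Suc n) M s y)) = iint n (\<lambda>x. G (Sh n M s x))"
    by (simp add: inner)
  also have "\<dots> = iint n G" by (rule Suc.IH[OF Gc Gp])
  also have "\<dots> = iint (Suc n) g" by (simp add: G_def[abs_def])
  finally show ?case .
qed

lemma integral_e_int:
  "integral {0..1} (\<lambda>t. e (of_int k * t)) = (if k = 0 then 1 else 0)"
proof (cases "k = 0")
  case True then show ?thesis by simp
next
  case False
  define F where "F t = e (of_int k * t) / (2 * pi * \<i> * of_int k)" for t
  have d: "(F has_vector_derivative e (of_int k * t)) (at t within {0..1})" for t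
  proof -
    define f where "f z = exp (2 * pi * \<i> * (of_int k * z)) / (2 * pi * \<i> * of_int k)" for z
    have Feq: "F = (\<lambda>t. f (of_real t))"
      unfolding F_def e_def f_def by (auto intro!: ext)
    have "(f has_field_derivative e (of_int k * t)) (at (of_real t))"
      using False unfolding e_def f_def
      by (auto intro!: derivative_eq_intros simp: field_simps)
    then have "((\<lambda>t. f (of_real t)) has_vector_derivative e (of_int k * t)) (at t within {0..1})"
      by (rule has_vector_derivative_real_field)
    then show ?thesis unfolding Feq .
  qed
  have "((\<lambda>t. e (of_int k * t)) has_integral (F 1 - F 0)) {0..1}"
    by (rule fundamental_theorem_of_calculus) (auto intro: d)
  moreover have "F 1 - F 0 = 0" unfolding F_def using e_int[of k] by simp
  ultimately show ?thesis using False by (simp add: integral_unique)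
qed

lemma iint_exp:
  "iint n (\<lambda>y. c * e (\<Sum>m<n. of_int (k m) * y m)) = (\<lambda>x. if \<forall>m<n. k m = 0 then c else 0)"
proof (induction n arbitrary: c)
  case 0 then show ?case by simp
next
  case (Suc n)
  have inn: "integral {0..1} (\<lambda>t. c * e (\<Sum>m<Suc n. of_int (k m) * (x(n := t)) m))
      = (c * (if k n = 0 then 1 else 0)) * e (\<Sum>m<n. of_int (k m) * x m)" for x
  proof -
    have "(\<lambda>t. c * e (\<Sum>m<Suc n. of_int (k m) * (x(n := t)) m)) = (\<lambda>t. (c * e (\<Sum>m<n. of_int (k m) * x m)) * e (of_int (k n) * t))"
      by (rule ext) (simp add: sum.lessThan_Suc e_add mult.assoc)
    then have "integral {0..1} (\<lambda>t. c * e (\<Sum>m<Suc n. of_int (k m) * (x(n := t)) m))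
      = integral {0..1} (\<lambda>t. (c * e (\<Sum>m<n. of_int (k m) * x m)) * e (of_int (k n) * t))"
      by (simp only:)
    also have "\<dots> = (c * e (\<Sum>m<n. of_int (k m) * x m)) * (if k n = 0 then 1 else 0)"
      by (simp only: integral_mult_right integral_e_int)
    finally show ?thesis by (simp only: ac_simps)
  qed
  then have "iint (Suc n) (\<lambda>y. c * e (\<Sum>m<Suc n. of_int (k m) * y m))
     = iint n (\<lambda>x. (c * (if k n = 0 then 1 else 0)) * e (\<Sum>m<n. of_int (k m) * x m))"
    by (simp only: iint.simps inn)
  also have "\<dots> = (\<lambda>x. if \<forall>m<Suc n. k m = 0 then c else 0)"
    by (auto simp: Suc.IH less_Suc_eq)
  finally show ?case .
qed


lemma cont_coord[continuous_intros]: "continuous_on S (\<lambda>y::nat\<Rightarrow>real. y m)"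
  by (rule continuous_on_subset[OF continuous_on_product_coordinates]) simp

lemma cont_dotr[continuous_intros]: "continuous_on S (\<lambda>y. dotr i l y)"
  unfolding dotr_def by (intro continuous_on_sum continuous_on_mult continuous_on_const cont_coord)

lemma dotr_upd: "m < i \<Longrightarrow> dotr i l (y(m := t)) = dotr i l y + of_int (l m) * (t - y m)"
proof -
  assume m: "m < i"
  have "dotr i l (y(m := t)) - dotr i l y = (\<Sum>k<i. of_int (l k) * ((y(m := t)) k - y k))"
    unfolding dotr_def by (simp add: sum_subtractf[symmetric] algebra_simps)
  also have "\<dots> = (\<Sum>k<i. if k = m then of_int (l m) * (t - y m) else 0)"
    by (intro sum.cong) auto
  also have "\<dots> = of_int (l m) * (t - y m)" using m by simp
  finally show ?thesis by simp
qed

lemma torus_shift1: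
  assumes "torus_fun i u" "j < i"
  shows "u (x(j := x j + of_int k)) = u x"
proof -
  define f where "f t = u (x(j := t))" for t
  have "f (t + 1) = f t" for t
  proof -
    have "(x(j := t))(j := (x(j := t)) j + 1) = x(j := t + 1)" by simp
    then show ?thesis using assms unfolding torus_fun_def f_def by metis
  qed
  from per_int[of f, OF this] have "f (x j + of_int k) = f (x j)" .
  then show ?thesis unfolding f_def by simp
qed

lemma torus_shift:
  assumes "torus_fun i u" "\<And>m. m < i \<Longrightarrow> \<exists>k::int. x m = x' m + of_int k"
  shows "u x = u x'"
proof -
  have "n \<le> i \<Longrightarrow> \<forall>x x'. (\<forall>m<n. \<exists>k::int. x m = x' m + of_int k) \<and> (\<forall>m. n \<le> m \<and> m < i \<longrightarrow> x m = x' m) \<longrightarrow> u x = u x'" for n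
  proof (induction n)
    case 0 then show ?case using assms(1) unfolding torus_fun_def by auto
  next
    case (Suc n)
    show ?case
    proof (intro allI impI)
      fix x x' :: "nat \<Rightarrow> real"
      assume h: "(\<forall>m<Suc n. \<exists>k::int. x m = x' m + of_int k) \<and> (\<forall>m. Suc n \<le> m \<and> m < i \<longrightarrow> x m = x' m)"
      define x'' where "x'' = x'(n := x n)"
      have a1: "\<forall>m<n. \<exists>k::int. x m = x'' m + of_int k" using h unfolding x''_def by auto
      have a2: "\<forall>m. n \<le> m \<and> m < i \<longrightarrow> x m = x'' m"
      proof (intro allI impI)
        fix m assume "n \<le> m \<and> m < i"
        then show "x m = x'' m" using h unfolding x''_def by (cases "m = n") auto
      qed
      have "u x = u x''" using Suc.IH Suc.prems a1 a2 by simp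
      moreover obtain k :: int where "x n = x' n + of_int k" using h by auto
      then have "x'' = x'(n := x' n + of_int k)" unfolding x''_def by simp
      then have "u x'' = u x'" using torus_shift1[OF assms(1), of n x' k] Suc.prems by simp
      ultimately show "u x = u x'" by simp
    qed
  qed
  from this[of i] assms(2) show ?thesis by auto
qed

lemma dist_upd_le: "dist (x(j := x j + h)) (x :: nat \<Rightarrow> real) \<le> 2 * \<bar>h\<bar>"
proof -
  have le: "(1/2::real)^n * min (dist ((x(j := x j + h)) (from_nat n)) (x (from_nat n))) 1 \<le> (1/2)^n * \<bar>h\<bar>" for n
  proof -
    have "dist ((x(j := x j + h)) (from_nat n)) (x (from_nat n)) \<le> \<bar>h\<bar>"
      by (cases "from_nat n = j") (auto simp: dist_real_def)
    then show ?thesis by (intro mult_left_mono) auto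
  qed
  have sg: "summable (\<lambda>n. (1/2::real)^n * \<bar>h\<bar>)"
    by (intro summable_mult2 summable_geometric) simp
  have sf: "summable (\<lambda>n. (1/2::real)^n * min (dist ((x(j := x j + h)) (from_nat n)) (x (from_nat n))) 1)"
    by (rule summable_comparison_test'[OF sg, of 0]) (use le in auto)
  have "dist (x(j := x j + h)) x = (\<Sum>n. (1/2::real)^n * min (dist ((x(j := x j + h)) (from_nat n)) (x (from_nat n))) 1)"
    by (simp add: dist_fun_def)
  also have "\<dots> \<le> (\<Sum>n. (1/2::real)^n * \<bar>h\<bar>)" by (rule suminf_le[OF le sf sg])
  also have "\<dots> = 2 * \<bar>h\<bar>"
    using suminf_mult2[OF summable_geometric[of "1/2::real"]] suminf_geometric[of "1/2::real"] by simp
  finally show ?thesis .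
qed

definition Kset :: "nat \<Rightarrow> (nat \<Rightarrow> real) set" where
  "Kset i = PiE UNIV (\<lambda>m. if m < i then {-1..2} else {0})"

lemma compact_Kset: "compact (Kset i)"
proof -
  have "compactin (product_topology (\<lambda>_. euclidean) UNIV) (Kset i)"
    unfolding Kset_def compactin_PiE by auto
  then show ?thesis by (simp add: euclidean_product_topology)
qed

lemma unif_shift:
  assumes cu: "continuous_on UNIV u" and tu: "torus_fun i u" and j: "j < i" and eps: "\<epsilon> > 0"
  shows "\<exists>\<delta>>0. \<forall>y h. \<bar>h\<bar> < \<delta> \<longrightarrow> norm (u (y(j := y j + h)) - u y) < \<epsilon>"
proof -
  have "uniformly_continuous_on (Kset i) u"
    by (rule compact_uniformly_continuous[OF continuous_on_subset[OF cu] compact_Kset]) auto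
  then obtain d where d: "d > 0" "\<And>x x'. x \<in> Kset i \<Longrightarrow> x' \<in> Kset i \<Longrightarrow> dist x' x < d \<Longrightarrow> dist (u x') (u x) < \<epsilon>"
    unfolding uniformly_continuous_on_def using eps by metis
  define \<delta> where "\<delta> = min 1 (d/2)"
  have "\<delta> > 0" using d by (simp add: \<delta>_def)
  moreover have "norm (u (y(j := y j + h)) - u y) < \<epsilon>" if h: "\<bar>h\<bar> < \<delta>" for y h
  proof -
    define z where "z = (\<lambda>m. if m < i then frac (y m) else 0)"
    define z' where "z' = z(j := z j + h)"
    have "z m \<in> (if m<i then {-1..2} else {0})" for m
      unfolding z_def using frac_ge_0[of "y m"] frac_lt_1[of "y m"] by (auto simp del: frac_ge_0)
    then have zK: "z \<in> Kset i" unfolding Kset_def PiE_iff by auto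
    have "0 \<le> z j" "z j < 1" using j unfolding z_def by (auto simp: frac_lt_1)
    have "z' m \<in> (if m<i then {-1..2} else {0})" for m
    proof (cases "m = j")
      case True then show ?thesis using \<open>0\<le>z j\<close> \<open>z j<1\<close> h j unfolding z'_def \<delta>_def by auto
    next
      case False then show ?thesis using zK unfolding z'_def Kset_def PiE_iff by auto
    qed
    then have z'K: "z' \<in> Kset i" unfolding Kset_def PiE_iff by auto
    have "dist z' z < d" using dist_upd_le[of z j h] h unfolding z'_def \<delta>_def by linarith
    with d(2)[OF zK z'K] have "dist (u z') (u z) < \<epsilon>" .
    moreover have "u y = u z"
      by (rule torus_shift[OF tu]) (auto simp: z_def frac_def intro!: exI[of _ "\<lfloor>y m\<rfloor>" for m])
    moreover have "u (y(j := y j + h)) = u z'"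
      by (rule torus_shift[OF tu]) (auto simp: z_def z'_def frac_def intro!: exI[of _ "\<lfloor>y m\<rfloor>" for m])
    ultimately show ?thesis by (simp add: dist_norm)
  qed
  ultimately show ?thesis by blast
qed


definition Fc :: "nat \<Rightarrow> ((nat\<Rightarrow>real)\<Rightarrow>complex) \<Rightarrow> (nat\<Rightarrow>int) \<Rightarrow> complex" where
  "Fc i u l = iint i (\<lambda>y. u y * e (- dotr i l y)) (\<lambda>_. 0)"

lemma cont_upd_shift[continuous_intros]:
  "continuous_on S (\<lambda>y::nat\<Rightarrow>real. y(j := y j + h))"
proof (intro continuous_on_coordinatewise_then_product)
  fix m show "continuous_on S (\<lambda>y::nat\<Rightarrow>real. (y(j := y j + h)) m)"
    by (cases "m = j") (auto intro!: continuous_intros)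
qed

lemma e_minus_half: "e (x - 1/2) = - e x"
  using e_half[of "x - 1/2"] by simp

lemma decay:
  assumes cu: "continuous_on UNIV u" and tu: "torus_fun i u" and j: "j < i" and eps: "\<epsilon> > 0"
  shows "\<exists>R. \<forall>l. R \<le> \<bar>l j\<bar> \<longrightarrow> norm (Fc i u l) \<le> \<epsilon>"
proof -
  obtain \<delta> where d: "\<delta> > 0" "\<And>y h. \<bar>h\<bar> < \<delta> \<Longrightarrow> norm (u (y(j := y j + h)) - u y) < \<epsilon>"
    using unif_shift[OF cu tu j eps] by blast
  define R :: int where "R = \<lceil>1/\<delta>\<rceil> + 1"
  have R1: "real_of_int R > 1/\<delta>" unfolding R_def by linarith
  have Rpos: "R > 0" using R1 d(1) by (smt (verit) of_int_0_less_iff zero_less_divide_1_iff)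
  have "norm (Fc i u l) \<le> \<epsilon>" if lR: "R \<le> \<bar>l j\<bar>" for l
  proof -
    have lj: "l j \<noteq> 0" using lR Rpos by auto
    define h where "h = 1 / (2 * real_of_int (l j))"
    have "\<bar>h\<bar> = 1 / (2 * \<bar>real_of_int (l j)\<bar>)" unfolding h_def by (simp add: abs_mult)
    also have "\<dots> \<le> 1 / (2 * real_of_int R)"
      using lR Rpos by (intro divide_left_mono mult_left_mono) (auto simp flip: of_int_abs)
    also have "\<dots> < \<delta>"
      using R1 d(1) Rpos by (simp add: field_simps)
    finally have hd: "\<bar>h\<bar> < \<delta>" .
    have ljh: "real_of_int (l j) * h = 1/2" unfolding h_def using lj by simp
    define g where "g y = u y * e (- dotr i l y)" for y
    define g2 where "g2 y = u (y(j := y j + h)) * e (- dotr i l y)" for y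
    have cg: "continuous_on UNIV g" unfolding g_def by (intro continuous_intros cu)
    have cg2: "continuous_on UNIV g2" unfolding g2_def
      by (intro continuous_intros continuous_on_compose2[OF cu cont_upd_shift]) auto
    have pg: "g (x(m := x m + 1)) = g x" if "m < i" for x m
    proof -
      have "u (x(m := x m + 1)) = u x" using tu that unfolding torus_fun_def by blast
      moreover have "e (- dotr i l (x(m := x m + 1))) = e (- dotr i l x)"
        using dotr_upd[OF that, of l x "x m + 1"] e_add[of "- dotr i l x" "of_int (- l m)"] e_int[of "- l m"]
        by simp
      ultimately show ?thesis unfolding g_def by simp
    qed
    define s where "s m = (if m = j then h else 0)" for m
    have Sh_eq: "Sh i (\<lambda>_ _. 0) s y = y(j := y j + h)" for y
      unfolding Sh_def s_def using j by (auto intro!: ext)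
    have "iint i (\<lambda>y. g (y(j := y j + h))) = iint i g"
      using iint_shear[OF cg pg, where n=i and M="\<lambda>_ _. 0" and s=s] by (simp only: Sh_eq)
    moreover have "g (y(j := y j + h)) = (-1) * g2 y" for y
    proof -
      have "dotr i l (y(j := y j + h)) = dotr i l y + 1/2" using dotr_upd[OF j, of l y] ljh by simp
      then show ?thesis unfolding g_def g2_def using e_minus_half[of "- dotr i l y"] by simp
    qed
    ultimately have eq: "iint i g = (\<lambda>x. (-1) * iint i g2 x)"
      by (simp only: iint_cmult)
    have "iint i (\<lambda>y. g y - g2 y) = (\<lambda>x. iint i g x - iint i g2 x)" by (rule iint_diff[OF cg cg2])
    then have "iint i (\<lambda>y. g y - g2 y) (\<lambda>_. 0) = 2 * Fc i u l"
      unfolding Fc_def using eq by (simp add: g_def[abs_def] fun_eq_iff)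
    moreover have "norm (iint i (\<lambda>y. g y - g2 y) (\<lambda>_. 0)) \<le> \<epsilon>"
    proof (rule iint_bound)
      show "continuous_on UNIV (\<lambda>y. g y - g2 y)" by (intro continuous_intros cg cg2)
      fix y
      have "norm (g y - g2 y) = norm (u y - u (y(j := y j + h)))"
        unfolding g_def g2_def by (simp add: left_diff_distrib[symmetric] norm_mult)
      also have "\<dots> < \<epsilon>" using d(2)[OF hd, of y] by (simp add: norm_minus_commute)
      finally show "norm (g y - g2 y) \<le> \<epsilon>" by simp
    qed
    ultimately have "norm (2 * Fc i u l) \<le> \<epsilon>" by simp
    then show ?thesis using eps by (simp add: norm_mult)
  qed
  then show ?thesis by blast
qed


lemma Fc_exp:
  assumes "supp_in i l" "supp_in i l'"
  shows "Fc i (\<lambda>y. e (dotr i l y)) l' = (if l = l' then 1 else 0)"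
proof -
  have "(\<lambda>y. e (dotr i l y) * e (- dotr i l' y)) = (\<lambda>y. 1 * e (\<Sum>m<i. of_int (l m - l' m) * y m))"
    by (rule ext) (simp add: dotr_def e_add[symmetric] sum_subtractf[symmetric] algebra_simps)
  then have "Fc i (\<lambda>y. e (dotr i l y)) l' = (if \<forall>m<i. l m - l' m = 0 then 1 else 0)"
    unfolding Fc_def by (simp only: iint_exp)
  moreover have "(\<forall>m<i. l m - l' m = 0) \<longleftrightarrow> l = l'"
    using assms unfolding supp_in_def by (auto simp: fun_eq_iff) (metis not_less)
  ultimately show ?thesis by simp
qed

lemma Fc_sum:
  assumes "finite S" "\<And>l. l \<in> S \<Longrightarrow> supp_in i l" "supp_in i l'"
  shows "Fc i (\<lambda>y. \<Sum>l\<in>S. c l * e (dotr i l y)) l' = (if l' \<in> S then c l' else 0)"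
proof -
  have "Fc i (\<lambda>y. \<Sum>l\<in>S. c l * e (dotr i l y)) l'
      = iint i (\<lambda>y. \<Sum>l\<in>S. c l * (e (dotr i l y) * e (- dotr i l' y))) (\<lambda>_. 0)"
    unfolding Fc_def by (simp add: sum_distrib_right mult.assoc)
  also have "\<dots> = (\<Sum>l\<in>S. iint i (\<lambda>y. c l * (e (dotr i l y) * e (- dotr i l' y))) (\<lambda>_. 0))"
    by (subst iint_sum) (auto intro!: continuous_intros assms(1))
  also have "\<dots> = (\<Sum>l\<in>S. c l * Fc i (\<lambda>y. e (dotr i l y)) l')"
    unfolding Fc_def by (simp only: iint_cmult)
  also have "\<dots> = (\<Sum>l\<in>S. if l = l' then c l else 0)"
    by (intro sum.cong refl) (simp add: Fc_exp assms)
  also have "\<dots> = (if l' \<in> S then c l' else 0)" using assms(1) by (simp add: sum.delta')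
  finally show ?thesis .
qed

lemma Fc_diff:
  assumes "continuous_on UNIV f" "continuous_on UNIV g"
  shows "Fc i (\<lambda>y. f y - g y) l = Fc i f l - Fc i g l"
proof -
  have "(\<lambda>y. (f y - g y) * e (- dotr i l y)) = (\<lambda>y. f y * e (- dotr i l y) - g y * e (- dotr i l y))"
    by (simp add: left_diff_distrib)
  then show ?thesis unfolding Fc_def
    by (simp add: iint_diff assms continuous_intros)
qed

lemma g_per:
  assumes tu: "torus_fun i u" and m: "m < i"
  shows "u (x(m := x m + 1)) * e (- dotr i l (x(m := x m + 1))) = u x * e (- dotr i l x)"
proof -
  have "u (x(m := x m + 1)) = u x" using tu m unfolding torus_fun_def by blast
  moreover have "e (- dotr i l (x(m := x m + 1))) = e (- dotr i l x)"
    using dotr_upd[OF m, of l x "x m + 1"] e_add[of "- dotr i l x" "of_int (- l m)"] e_int[of "- l m"]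
    by simp
  ultimately show ?thesis by simp
qed

lemma dotr_Tlift:
  "dotr i l (Tlift i A b y) = dotr i (Mstep i A l) y + dotr i l b"
proof -
  have "dotr i l (Tlift i A b y) = (\<Sum>m<i. of_int (l m) * ((\<Sum>k<i. y k * of_int (A k m)) + b m))"
    unfolding dotr_def Tlift_def by simp
  also have "\<dots> = (\<Sum>m<i. \<Sum>k<i. of_int (l m) * y k * of_int (A k m)) + dotr i l b"
    unfolding dotr_def by (simp add: distrib_left sum.distrib sum_distrib_left mult.assoc)
  also have "(\<Sum>m<i. \<Sum>k<i. of_int (l m) * y k * of_int (A k m)) = (\<Sum>k<i. \<Sum>m<i. of_int (l m) * y k * of_int (A k m))"
    by (rule sum.swap)
  also have "\<dots> = dotr i (Mstep i A l) y"
    unfolding dotr_def Mstep_def by (simp add: sum_distrib_left algebra_simps)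
  finally show ?thesis .
qed

lemma Tlift_Sh:
  assumes diag: "\<And>m. m < i \<Longrightarrow> A m m = 1" and low: "\<And>k m. m < k \<Longrightarrow> k < i \<Longrightarrow> A k m = 0"
  shows "Tlift i A b y = Sh i (\<lambda>k m. of_int (A k m)) b y"
proof (rule ext)
  fix m
  show "Tlift i A b y m = Sh i (\<lambda>k m. of_int (A k m)) b y m"
  proof (cases "m < i")
    case False then show ?thesis unfolding Tlift_def Sh_def by simp
  next
    case True
    have split: "{..<i} = {..<m} \<union> {m} \<union> {Suc m..<i}" using True by auto
    have "(\<Sum>k<i. y k * of_int (A k m)) = (\<Sum>k<m. y k * of_int (A k m)) + y m * of_int (A m m)
            + (\<Sum>k\<in>{Suc m..<i}. y k * of_int (A k m))"
      unfolding split by (subst sum.union_disjoint, auto)+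
    also have "(\<Sum>k\<in>{Suc m..<i}. y k * of_int (A k m)) = 0"
      by (intro sum.neutral) (auto simp: low)
    finally show ?thesis unfolding Tlift_def Sh_def using True diag by simp
  qed
qed

lemma Fc_Tlift:
  assumes cu: "continuous_on UNIV u" and tu: "torus_fun i u"
    and diag: "\<And>m. m < i \<Longrightarrow> A m m = 1" and low: "\<And>k m. m < k \<Longrightarrow> k < i \<Longrightarrow> A k m = 0"
  shows "Fc i (\<lambda>y. u (Tlift i A b y)) (Mstep i A l) = e (dotr i l b) * Fc i u l"
proof -
  define g where "g z = u z * e (- dotr i l z)" for z
  have cg: "continuous_on UNIV g" unfolding g_def by (intro continuous_intros cu)
  have pg: "g (x(m := x m + 1)) = g x" if "m < i" for x m
    unfolding g_def by (rule g_per[OF tu that])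
  have "(\<lambda>y. u (Tlift i A b y) * e (- dotr i (Mstep i A l) y))
      = (\<lambda>y. e (dotr i l b) * g (Sh i (\<lambda>k m. of_int (A k m)) b y))"
  proof (rule ext)
    fix y
    have ee: "e (- dotr i (Mstep i A l) y) = e (dotr i l b) * e (- dotr i l (Tlift i A b y))"
      unfolding dotr_Tlift e_add[symmetric] by simp
    have Teq: "Tlift i A b y = Sh i (\<lambda>k m. of_int (A k m)) b y" by (rule Tlift_Sh[OF diag low])
    show "u (Tlift i A b y) * e (- dotr i (Mstep i A l) y)
      = e (dotr i l b) * g (Sh i (\<lambda>k m. of_int (A k m)) b y)"
      unfolding g_def ee Teq[symmetric] by (simp add: ac_simps)
  qed
  then have "Fc i (\<lambda>y. u (Tlift i A b y)) (Mstep i A l)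
      = e (dotr i l b) * iint i (\<lambda>y. g (Sh i (\<lambda>k m. of_int (A k m)) b y)) (\<lambda>_. 0)"
    unfolding Fc_def by (simp only: iint_cmult)
  also have "\<dots> = e (dotr i l b) * Fc i u l"
    by (subst iint_shear[OF cg pg, where n=i]) (simp_all add: Fc_def g_def[abs_def])
  finally show ?thesis .
qed


locale tri =
  fixes i :: nat and A :: "nat \<Rightarrow> nat \<Rightarrow> int"
  assumes diag: "\<And>m. m < i \<Longrightarrow> A m m = 1"
    and low: "\<And>k m. m < k \<Longrightarrow> k < i \<Longrightarrow> A k m = 0"
begin

abbreviation "M \<equiv> Mstep i A"

lemma M_supp: "supp_in i (M l)"
  unfolding supp_in_def Mstep_def by auto

lemma Mpow_supp: "supp_in i l \<Longrightarrow> supp_in i ((M ^^ n) l)"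
  by (induction n) (auto simp: M_supp)

lemma M_split: "k < i \<Longrightarrow> M l k = l k + (\<Sum>n\<in>{k<..<i}. l n * A k n)"
proof -
  assume k: "k < i"
  have split: "{..<i} = {..<k} \<union> {k} \<union> {k<..<i}" using k by auto
  have "(\<Sum>n<i. l n * A k n) = (\<Sum>n<k. l n * A k n) + l k * A k k + (\<Sum>n\<in>{k<..<i}. l n * A k n)"
    unfolding split by (subst sum.union_disjoint, auto)+
  also have "(\<Sum>n<k. l n * A k n) = 0" by (intro sum.neutral) (auto simp: low k)
  finally show ?thesis unfolding Mstep_def using k diag by simp
qed

lemma M_inj:
  assumes "supp_in i p" "supp_in i q" "M p = M q"
  shows "p = q"
proof -
  have "\<forall>n. i - j \<le> n \<and> n < i \<longrightarrow> p n = q n" for j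
  proof (induction j)
    case 0 then show ?case by auto
  next
    case (Suc j)
    show ?case
    proof (intro allI impI)
      fix n assume n: "i - Suc j \<le> n \<and> n < i"
      show "p n = q n"
      proof (cases "i - j \<le> n")
        case True then show ?thesis using Suc.IH n by auto
      next
        case False
        have "(\<Sum>m\<in>{n<..<i}. p m * A n m) = (\<Sum>m\<in>{n<..<i}. q m * A n m)"
          using Suc.IH False n by (intro sum.cong) auto
        moreover have "M p n = M q n" using assms(3) by simp
        ultimately show ?thesis using M_split[of n p] M_split[of n q] n by simp
      qed
    qed
  qed
  from this[of i] assms(1,2) show ?thesis unfolding supp_in_def by (auto intro!: ext) (metis not_less)
qed

lemma M_surj:
  assumes w: "supp_in i w"
  shows "\<exists>p. supp_in i p \<and> M p = w"
proof -
  have "j \<le> i \<Longrightarrow> \<exists>p. supp_in i p \<and> (\<forall>k. i - j \<le> k \<and> k < i \<longrightarrow> M p k = w k)" for j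
  proof (induction j)
    case 0 show ?case by (rule exI[of _ "\<lambda>_. 0"]) (auto simp: supp_in_def)
  next
    case (Suc j)
    then obtain p where p: "supp_in i p" "\<And>k. i - j \<le> k \<Longrightarrow> k < i \<Longrightarrow> M p k = w k" by auto
    define k0 where "k0 = i - Suc j"
    have k0: "k0 < i" "i - j = Suc k0" using Suc.prems unfolding k0_def by auto
    define p' where "p' = p(k0 := p k0 + (w k0 - M p k0))"
    have sp': "supp_in i p'" using p(1) k0 unfolding supp_in_def p'_def by auto
    have "M p' k = w k" if "i - Suc j \<le> k" "k < i" for k
    proof (cases "k = k0")
      case True
      have "(\<Sum>n\<in>{k<..<i}. p' n * A k n) = (\<Sum>n\<in>{k<..<i}. p n * A k n)"
        unfolding p'_def using True by (intro sum.cong) auto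
      then show ?thesis using M_split[of k p'] M_split[of k p] that True unfolding p'_def by simp
    next
      case False
      then have kk: "k0 < k" using that k0_def by auto
      have "(\<Sum>n\<in>{k<..<i}. p' n * A k n) = (\<Sum>n\<in>{k<..<i}. p n * A k n)"
        unfolding p'_def using kk by (intro sum.cong) auto
      then have "M p' k = M p k" using M_split[of k p'] M_split[of k p] that kk unfolding p'_def by simp
      also have "\<dots> = w k" using p(2) that kk k0 by auto
      finally show ?thesis .
    qed
    then show ?case using sp' by blast
  qed
  from this[of i] obtain p where p: "supp_in i p" "\<And>k. k < i \<Longrightarrow> M p k = w k" by auto
  have "M p = w"
  proof
    fix k show "M p k = w k"
      using p(2) w unfolding supp_in_def Mstep_def by (cases "k < i") auto
  qed
  then show ?thesis using p(1) by blast
qed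

lemma Mpow_inj: "supp_in i p \<Longrightarrow> supp_in i q \<Longrightarrow> (M ^^ n) p = (M ^^ n) q \<Longrightarrow> p = q"
proof (induction n arbitrary: p q)
  case 0 then show ?case by simp
next
  case (Suc n)
  have "(M ^^ n) (M p) = (M ^^ n) (M q)" using Suc.prems(3) by (simp add: funpow_Suc_right del: funpow.simps)
  then have "M p = M q" using Suc.IH M_supp by blast
  then show ?case using M_inj Suc.prems by blast
qed

lemma Mpow_surj: "supp_in i w \<Longrightarrow> \<exists>p. supp_in i p \<and> (M ^^ n) p = w"
proof (induction n arbitrary: w)
  case 0 then show ?case by auto
next
  case (Suc n)
  then obtain q where q: "supp_in i q" "(M ^^ n) q = w" by blast
  obtain p where "supp_in i p" "M p = q" using M_surj[OF q(1)] by blast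
  then show ?case using q by (intro exI[of _ p]) (simp add: funpow_Suc_right del: funpow.simps)
qed

lemma orb_neg:
  assumes l0: "supp_in i l0"
  shows "supp_in i (orb i A l0 (- int n)) \<and> (M ^^ n) (orb i A l0 (- int n)) = l0"
proof (cases "n = 0")
  case True then show ?thesis using l0 by (simp add: orb_def)
next
  case False
  have ex: "\<exists>!p. supp_in i p \<and> (M ^^ n) p = l0"
    using Mpow_surj[OF l0, of n] Mpow_inj by blast
  have "orb i A l0 (- int n) = (THE p. supp_in i p \<and> (M ^^ n) p = l0)"
    using False unfolding orb_def by simp
  then show ?thesis using theI'[OF ex] by simp
qed

lemma orb_supp: "supp_in i l0 \<Longrightarrow> supp_in i (orb i A l0 k)"
proof (cases "k \<ge> 0")
  case True
  assume "supp_in i l0"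
  then show ?thesis using True by (simp add: orb_def Mpow_supp)
next
  case False
  assume l0: "supp_in i l0"
  then show ?thesis using orb_neg[OF l0, of "nat (-k)"] False by simp
qed

lemma orb_step:
  assumes l0: "supp_in i l0"
  shows "orb i A l0 (k + 1) = M (orb i A l0 k)"
proof (cases "k \<ge> 0")
  case True
  then have "nat (k + 1) = Suc (nat k)" by simp
  then show ?thesis using True by (simp add: orb_def)
next
  case False
  define n where "n = nat (-k)"
  have n: "n \<ge> 1" "k = - int n" using False unfolding n_def by auto
  note P = orb_neg[OF l0, of n]
  show ?thesis
  proof (cases "n = 1")
    case True
    then have "orb i A l0 (k + 1) = l0" using n by (simp add: orb_def)
    then show ?thesis using P True n by simp
  next
    case False
    then have n1: "k + 1 = - int (n - 1)" "n - 1 \<noteq> 0" using n by auto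
    note Q = orb_neg[OF l0, of "n - 1"]
    have "(M ^^ (n - 1)) (M (orb i A l0 k)) = l0"
      using P n by (metis Suc_diff_le funpow_Suc_right o_apply diff_Suc_1 le_numeral_extra(4) Suc_le_eq)
    then have "M (orb i A l0 k) = orb i A l0 (k + 1)"
      using Q n1 M_supp Mpow_inj by metis
    then show ?thesis by simp
  qed
qed

end


lemma dotr_upd': "dotr i l (x(j := t)) = dotr i l x + (if j < i then of_int (l j) else 0) * (t - x j)"
proof (cases "j < i")
  case True then show ?thesis using dotr_upd[OF True] by simp
next
  case False
  then have "dotr i l (x(j := t)) = dotr i l x" unfolding dotr_def by (intro sum.cong) auto
  then show ?thesis using False by simp
qed

lemma e_deriv:
  "((\<lambda>t. e (a + c * (t - t0))) has_vector_derivative (2 * pi * \<i> * c) * e a) (at t0)"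
proof -
  define f where "f z = exp (2 * pi * \<i> * (of_real a + of_real c * (z - of_real t0)))" for z
  have eq: "(\<lambda>t. e (a + c * (t - t0))) = (\<lambda>t. f (of_real t))"
    unfolding f_def e_def by (auto intro!: ext)
  have "(f has_field_derivative (2 * pi * \<i> * c) * e a) (at (of_real t0))"
    unfolding f_def e_def by (auto intro!: derivative_eq_intros)
  then have "((\<lambda>t. f (of_real t)) has_vector_derivative (2 * pi * \<i> * c) * e a) (at t0)"
    using has_vector_derivative_real_field[of f _ t0 UNIV] by simp
  then show ?thesis unfolding eq .
qed

definition coef :: "nat \<Rightarrow> nat \<Rightarrow> (nat \<Rightarrow> int) \<Rightarrow> complex" where
  "coef i j l = (let c = (if j < i then of_int (l j) else 0 :: real) in 2 * pi * \<i> * c)"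

lemma esum_deriv:
  assumes "finite K"
  shows "((\<lambda>t. \<Sum>k\<in>K. w k * e (dotr i (l k) (x(j := t)))) has_vector_derivative
      (\<Sum>k\<in>K. (w k * coef i j (l k)) * e (dotr i (l k) x))) (at (x j))"
proof -
  have "((\<lambda>t. w k * e (dotr i (l k) (x(j := t)))) has_vector_derivative
      (w k * coef i j (l k)) * e (dotr i (l k) x)) (at (x j))" for k
  proof -
    have "((\<lambda>t. e (dotr i (l k) x + (if j < i then of_int (l k j) else 0) * (t - x j))) has_vector_derivative
      coef i j (l k) * e (dotr i (l k) x)) (at (x j))"
      unfolding coef_def Let_def by (rule e_deriv)
    then have "((\<lambda>t. e (dotr i (l k) (x(j := t)))) has_vector_derivative
      coef i j (l k) * e (dotr i (l k) x)) (at (x j))" by (simp only: dotr_upd')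
    from has_vector_derivative_mult_right[OF this, of "w k"] show ?thesis by (simp add: mult.assoc)
  qed
  then show ?thesis by (intro has_vector_derivative_sum) auto
qed

lemma esum_pdiff:
  assumes "finite K"
  shows "pdiff j (\<lambda>y. \<Sum>k\<in>K. w k * e (dotr i (l k) y)) = (\<lambda>y. \<Sum>k\<in>K. (w k * coef i j (l k)) * e (dotr i (l k) y))"
  unfolding pdiff_def using esum_deriv[OF assms] by (auto intro!: ext vector_derivative_at)

lemma esum_iter:
  assumes "finite K"
  shows "\<exists>w'. iter_pdiff js (\<lambda>y. \<Sum>k\<in>K. w k * e (dotr i (l k) y)) = (\<lambda>y. \<Sum>k\<in>K. w' k * e (dotr i (l k) y))"
proof (induction js)
  case Nil then show ?case by auto
next
  case (Cons j js)
  then obtain w' where "iter_pdiff js (\<lambda>y. \<Sum>k\<in>K. w k * e (dotr i (l k) y)) = (\<lambda>y. \<Sum>k\<in>K. w' k * e (dotr i (l k) y))"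
    by blast
  then show ?case using esum_pdiff[OF assms] by auto
qed

lemma esum_smooth:
  assumes "finite K"
  shows "smooth_in i (\<lambda>y. \<Sum>k\<in>K. w k * e (dotr i (l k) y))"
  unfolding smooth_in_def
proof (intro allI impI conjI)
  fix js :: "nat list"
  obtain w' where w': "iter_pdiff js (\<lambda>y. \<Sum>k\<in>K. w k * e (dotr i (l k) y)) = (\<lambda>y. \<Sum>k\<in>K. w' k * e (dotr i (l k) y))"
    using esum_iter[OF assms] by blast
  show "continuous_on UNIV (iter_pdiff js (\<lambda>y. \<Sum>k\<in>K. w k * e (dotr i (l k) y)))"
    unfolding w' by (intro continuous_intros)
  fix j x assume "j < i"
  show "(\<lambda>t. iter_pdiff js (\<lambda>y. \<Sum>k\<in>K. w k * e (dotr i (l k) y)) (x(j := t))) differentiable at (x j)"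
    unfolding w' using esum_deriv[OF assms] differentiableI_vector by blast
qed

lemma esum_torus:
  assumes "\<And>k. k \<in> K \<Longrightarrow> supp_in i (l k)"
  shows "torus_fun i (\<lambda>y. \<Sum>k\<in>K. w k * e (dotr i (l k) y))"
  unfolding torus_fun_def
proof (intro conjI allI impI)
  fix x x' :: "nat \<Rightarrow> real"
  assume "\<forall>j<i. x j = x' j"
  then have "dotr i l' x = dotr i l' x'" for l' unfolding dotr_def by simp
  then show "(\<Sum>k\<in>K. w k * e (dotr i (l k) x)) = (\<Sum>k\<in>K. w k * e (dotr i (l k) x'))" by simp
next
  fix x :: "nat \<Rightarrow> real" and j assume j: "j < i"
  have "e (dotr i l' (x(j := x j + 1))) = e (dotr i l' x)" for l'
    using dotr_upd[OF j, of l' x "x j + 1"] e_add[of "dotr i l' x" "of_int (l' j)"] e_int[of "l' j"] by simp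
  then show "(\<Sum>k\<in>K. w k * e (dotr i (l k) (x(j := x j + 1)))) = (\<Sum>k\<in>K. w k * e (dotr i (l k) x))" by simp
qed


lemma cont_Tlift[continuous_intros]: "continuous_on S (Tlift i A b)"
proof (intro continuous_on_coordinatewise_then_product)
  fix m show "continuous_on S (\<lambda>y. Tlift i A b y m)"
    unfolding Tlift_def by (cases "m < i") (auto intro!: continuous_intros)
qed

context tri begin

lemma M_last: "1 \<le> i \<Longrightarrow> M l (i - 1) = l (i - 1)"
proof -
  assume "1 \<le> i"
  then have "{i - 1<..<i} = {}" by auto
  then show ?thesis using M_split[of "i - 1" l] \<open>1 \<le> i\<close> by simp
qed

lemma M_pen: "2 \<le> i \<Longrightarrow> M l (i - 2) = l (i - 2) + l (i - 1) * A (i - 2) (i - 1)"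
proof -
  assume "2 \<le> i"
  then have "{i - 2<..<i} = {i - 1}" by auto
  then show ?thesis using M_split[of "i - 2" l] \<open>2 \<le> i\<close> by simp
qed

lemma orb_coords:
  assumes l0: "supp_in i l0" and i2: "2 \<le> i"
  shows "orb i A l0 k (i - 1) = l0 (i - 1) \<and>
         orb i A l0 k (i - 2) = l0 (i - 2) + k * l0 (i - 1) * A (i - 2) (i - 1)"
proof (induction k rule: int_induct[where k=0])
  case base then show ?case by (simp add: orb_def)
next
  case (step1 k)
  have e1: "orb i A l0 (k + 1) = M (orb i A l0 k)" by (rule orb_step[OF l0])
  have a1: "orb i A l0 (k + 1) (i - 1) = l0 (i - 1)"
    unfolding e1 using M_last[of "orb i A l0 k"] step1 i2 by simp
  have a2: "orb i A l0 (k + 1) (i - 2) = orb i A l0 k (i - 2) + l0 (i - 1) * A (i - 2) (i - 1)"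
    unfolding e1 using M_pen[OF i2, of "orb i A l0 k"] step1 by simp
  show ?case using a1 a2 step1 by (simp add: distrib_right)
next
  case (step2 k)
  have e1: "orb i A l0 k = M (orb i A l0 (k - 1))" using orb_step[OF l0, of "k - 1"] by simp
  have a1: "orb i A l0 (k - 1) (i - 1) = l0 (i - 1)"
    using M_last[of "orb i A l0 (k - 1)"] step2 i2 e1 by simp
  have a2: "orb i A l0 k (i - 2) = orb i A l0 (k - 1) (i - 2) + l0 (i - 1) * A (i - 2) (i - 1)"
    unfolding e1 using M_pen[OF i2, of "orb i A l0 (k - 1)"] a1 by simp
  show ?case using a1 a2 step2 by (simp add: algebra_simps)
qed

end

lemma tele_pos:
  fixes G V :: "int \<Rightarrow> 'a::ab_group_add"
  assumes "\<And>k::int. G (k + 1) = V k - V (k + 1)"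
  shows "(\<Sum>k=1..K. G (int k)) = V 0 - V (int K)"
proof (induction K)
  case 0 then show ?case by simp
next
  case (Suc K)
  have "G (int (Suc K)) = V (int K) - V (int (Suc K))" using assms[of "int K"] by (simp add: add.commute)
  then show ?case using Suc.IH by simp
qed

lemma tele_neg:
  fixes G V :: "int \<Rightarrow> 'a::ab_group_add"
  assumes "\<And>k::int. G (k + 1) = V k - V (k + 1)"
  shows "(\<Sum>k=1..K. G (- int k)) = V (- int K - 1) - V (-1)"
proof (induction K)
  case 0 then show ?case by simp
next
  case (Suc K)
  have "G (- int (Suc K)) = V (- int (Suc K) - 1) - V (- int K - 1)"
  proof -
    have h: "- int K - 2 + 1 = - int (Suc K)" "- int K - 1 = - int (Suc K)" "- int (Suc K) - 1 = - int K - 2" by simp_all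
    show ?thesis using assms[of "- int K - 2"] unfolding h by simp
  qed
  then show ?case using Suc.IH by simp
qed

definition sig :: "(int \<Rightarrow> real) \<Rightarrow> int \<Rightarrow> real" where
  "sig \<beta> k = (if k \<ge> 0 then (\<Sum>j=0..<nat k. \<beta> (int j)) else - (\<Sum>j=1..nat (-k). \<beta> (- int j)))"

lemma sig_step: "sig \<beta> (k + 1) = sig \<beta> k + \<beta> k"
proof (cases "k \<ge> 0")
  case True
  then have "nat (k + 1) = Suc (nat k)" by simp
  then show ?thesis using True unfolding sig_def by simp
next
  case False
  define n where "n = nat (-k)"
  have n: "n \<ge> 1" "k = - int n" using False unfolding n_def by auto
  show ?thesis
  proof (cases "n = 1")
    case True then show ?thesis using n unfolding sig_def by simp
  next
    case False
    then have "nat (- (k + 1)) = n - 1" "\<not> k + 1 \<ge> 0" using n by auto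
    moreover have "(\<Sum>j=1..n. \<beta> (- int j)) = (\<Sum>j=1..n - 1. \<beta> (- int j)) + \<beta> (- int n)"
    proof -
      obtain m where m: "n = Suc m" using n by (cases n) auto
      show ?thesis unfolding m by simp
    qed
    ultimately show ?thesis using n unfolding sig_def by simp
  qed
qed

lemma sig_pos: "sig \<beta> (int k) = (\<Sum>j=0..<k. \<beta> (int j))"
  unfolding sig_def by simp

lemma sig_neg: "k \<ge> 1 \<Longrightarrow> sig \<beta> (- int k) = - (\<Sum>j=1..k. \<beta> (- int j))"
  unfolding sig_def by simp


theorem lemma3p3:
  fixes d i :: nat and A :: "nat \<Rightarrow> nat \<Rightarrow> int" and b :: "nat \<Rightarrow> real"
    and l0 :: "nat \<Rightarrow> int" and c :: "(nat \<Rightarrow> int) \<Rightarrow> complex" and N :: nat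
    and \<omega> :: "(nat \<Rightarrow> int) set" and \<Psi> :: "(nat \<Rightarrow> real) \<Rightarrow> complex"
  assumes d2: "2 \<le> d"
    and unip: "upper_unipotent d A"
    and ue: "uniquely_ergodic d A b"
    and superdiag: "\<forall>j. j + 1 < d \<longrightarrow> A j (j + 1) \<noteq> 0"
    and i_range: "2 \<le> i" "i \<le> d"
    and l0_supp: "supp_in i l0"
    and omega_def: "\<omega> = range (orb i A l0)"
    and last_nz: "\<exists>l\<in>\<omega>. l (i - 1) \<noteq> 0"
    and c_fin: "finite {l\<in>\<omega>. c l \<noteq> 0}"
    and c_N: "\<forall>n::int. \<bar>n\<bar> \<ge> int N \<longrightarrow> c (orb i A l0 n) = 0"
    and Psi_def: "\<forall>y. \<Psi> y = (\<Sum>l\<in>{l\<in>\<omega>. c l \<noteq> 0}. c l * e (dotr i l y))"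
  shows "smooth_coboundary i A b \<Psi> \<longleftrightarrow>
    (\<Sum>k=1..N. c (orb i A l0 (int k)) *
         e (- (\<Sum>j=0..<k. dotr i (orb i A l0 (int j)) b)))
    + c l0
    + (\<Sum>k=1..<N. c (orb i A l0 (- int k)) *
         e (\<Sum>j=1..k. dotr i (orb i A l0 (- int j)) b)) = 0"
proof -
  have diag: "\<And>m. m < i \<Longrightarrow> A m m = 1" using unip i_range unfolding upper_unipotent_def by auto
  have low: "\<And>k m. m < k \<Longrightarrow> k < i \<Longrightarrow> A k m = 0" using unip i_range unfolding upper_unipotent_def by auto
  interpret tri i A by unfold_locales (auto intro: diag low)
  define ob where "ob = orb i A l0"
  have ob_step: "\<And>k. ob (k + 1) = Mstep i A (ob k)" unfolding ob_def by (rule orb_step[OF l0_supp])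
  have ob_supp: "\<And>k. supp_in i (ob k)" unfolding ob_def by (rule orb_supp[OF l0_supp])
  have ob0: "ob 0 = l0" unfolding ob_def orb_def by simp
  define L where "L = l0 (i - 1)"
  define a where "a = A (i - 2) (i - 1)"
  have coords: "\<And>k. ob k (i - 1) = L \<and> ob k (i - 2) = l0 (i - 2) + k * L * a"
    unfolding ob_def L_def a_def using orb_coords[OF l0_supp i_range(1)] by blast
  have a0: "a \<noteq> 0"
  proof -
    have "i - 2 + 1 = i - 1" "i - 2 + 1 < d" using i_range by auto
    then show ?thesis using superdiag unfolding a_def by metis
  qed
  have L0: "L \<noteq> 0" using last_nz coords unfolding omega_def ob_def by auto
  have ob_inj: "inj ob"
  proof (rule injI)
    fix k k' assume "ob k = ob k'"
    then have "l0 (i - 2) + k * L * a = l0 (i - 2) + k' * L * a" using coords by metis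
    then show "k = k'" using L0 a0 by simp
  qed
  have omega: "\<omega> = range ob" unfolding omega_def ob_def ..
  define S where "S = {l \<in> \<omega>. c l \<noteq> 0}"
  have Sfin: "finite S" using c_fin unfolding S_def .
  have Ssupp: "\<And>l. l \<in> S \<Longrightarrow> supp_in i l" using ob_supp omega unfolding S_def by auto
  have cN: "\<And>k. int N \<le> \<bar>k\<bar> \<Longrightarrow> c (ob k) = 0" using c_N unfolding ob_def by auto
  define \<beta> where "\<beta> k = dotr i (ob k) b" for k
  define G where "G k = c (ob k) * e (- sig \<beta> k)" for k
  define Pos where "Pos = (\<Sum>k=1..N. G (int k))"
  define Neg where "Neg = (\<Sum>k=1..<N. G (- int k))"
  have LHS: "(\<Sum>k=1..N. c (orb i A l0 (int k)) *
         e (- (\<Sum>j=0..<k. dotr i (orb i A l0 (int j)) b)))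
    + c l0
    + (\<Sum>k=1..<N. c (orb i A l0 (- int k)) *
         e (\<Sum>j=1..k. dotr i (orb i A l0 (- int j)) b)) = Pos + G 0 + Neg"
  proof -
    have "(\<Sum>k=1..N. c (orb i A l0 (int k)) * e (- (\<Sum>j=0..<k. dotr i (orb i A l0 (int j)) b))) = Pos"
      unfolding Pos_def G_def sig_pos \<beta>_def ob_def by simp
    moreover have "(\<Sum>k=1..<N. c (orb i A l0 (- int k)) * e (\<Sum>j=1..k. dotr i (orb i A l0 (- int j)) b)) = Neg"
      unfolding Neg_def G_def \<beta>_def ob_def by (intro sum.cong refl) (simp add: sig_neg)
    moreover have "G 0 = c l0" unfolding G_def using sig_pos[of \<beta> 0] ob0 by simp
    ultimately show ?thesis by simp
  qed
  have Spos: "(\<Sum>k=1..K. G (int k)) = Pos" if "N \<le> K" for K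
    unfolding Pos_def using that
    by (intro sum.mono_neutral_right) (auto simp: G_def cN)
  have Sneg: "(\<Sum>k=1..K. G (- int k)) = Neg" if "N \<le> K + 1" for K
    unfolding Neg_def using that
    by (intro sum.mono_neutral_right) (auto simp: G_def cN)
  have key: "Pos + G 0 + Neg = V (- int K - 1) - V (int K)"
    if GV: "\<And>k. G (k + 1) = V k - V (k + 1)" and K: "N \<le> K" for V K
  proof -
    have "Pos = V 0 - V (int K)" using Spos[OF K] tele_pos[where G=G and V=V and K=K, OF GV] by simp
    moreover have "Neg = V (- int K - 1) - V (-1)" using Sneg[of K] K tele_neg[where G=G and V=V and K=K, OF GV] by simp
    moreover have "G 0 = V (-1) - V 0" using GV[of "-1"] by simp
    ultimately show ?thesis by simp
  qed
  show ?thesis unfolding LHS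
  proof
    assume "smooth_coboundary i A b \<Psi>"
    then obtain u where tu: "torus_fun i u" and su: "smooth_in i u"
      and ceq: "\<And>y. \<Psi> y = u (Tlift i A b y) - u y"
      unfolding smooth_coboundary_def by blast
    have cu: "continuous_on UNIV u"
      using su unfolding smooth_in_def by (metis empty_subsetI iter_pdiff.simps(1) list.set(1))
    define v where "v k = Fc i u (ob k)" for k
    define V where "V k = v k * e (- sig \<beta> k)" for k
    have Psi_eq: "\<Psi> = (\<lambda>y. \<Sum>l\<in>S. c l * e (dotr i l y))" using Psi_def unfolding S_def by auto
    have FcPsi: "Fc i \<Psi> (ob k) = c (ob k)" for k
    proof -
      have "Fc i \<Psi> (ob k) = (if ob k \<in> S then c (ob k) else 0)"
        unfolding Psi_eq by (rule Fc_sum[OF Sfin Ssupp ob_supp])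
      moreover have "ob k \<in> \<omega>" using omega by auto
      ultimately show ?thesis unfolding S_def by auto
    qed
    have cuT: "continuous_on UNIV (\<lambda>y. u (Tlift i A b y))"
      by (rule continuous_on_compose2[OF cu cont_Tlift]) auto
    have rel: "c (ob (k + 1)) = e (\<beta> k) * v k - v (k + 1)" for k
    proof -
      have "\<Psi> = (\<lambda>y. u (Tlift i A b y) - u y)" using ceq by auto
      then have "c (ob (k + 1)) = Fc i (\<lambda>y. u (Tlift i A b y)) (ob (k + 1)) - Fc i u (ob (k + 1))"
        using FcPsi[of "k + 1"] Fc_diff[OF cuT cu] by simp
      also have "Fc i (\<lambda>y. u (Tlift i A b y)) (ob (k + 1)) = e (\<beta> k) * v k"
        unfolding ob_step v_def \<beta>_def by (rule Fc_Tlift[OF cu tu diag low])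
      finally show ?thesis unfolding v_def by simp
    qed
    have GV: "G (k + 1) = V k - V (k + 1)" for k
    proof -
      have "e (\<beta> k) * e (- sig \<beta> (k + 1)) = e (- sig \<beta> k)"
        unfolding e_add[symmetric] sig_step by simp
      then show ?thesis unfolding G_def V_def rel by (simp add: algebra_simps)
    qed
    have "norm (Pos + G 0 + Neg) \<le> 2 * \<epsilon>" if eps: "\<epsilon> > 0" for \<epsilon>
    proof -
      have j: "i - 2 < i" using i_range by auto
      obtain R where R: "\<And>l. R \<le> \<bar>l (i - 2)\<bar> \<Longrightarrow> norm (Fc i u l) \<le> \<epsilon>"
        using decay[OF cu tu j eps] by blast
      define K where "K = nat (max (int N) (R + \<bar>l0 (i - 2)\<bar>))"
      have KN: "N \<le> K" unfolding K_def by simp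
      have big: "norm (v k) \<le> \<epsilon>" if "int K \<le> \<bar>k\<bar>" for k
      proof -
        have h1: "\<bar>L\<bar> \<ge> 1" "\<bar>a\<bar> \<ge> 1" using L0 a0 by arith+
        have "\<bar>L\<bar> * \<bar>a\<bar> \<ge> 1 * 1" by (rule mult_mono) (use h1 in auto)
        then have "\<bar>k\<bar> * (\<bar>L\<bar> * \<bar>a\<bar>) \<ge> \<bar>k\<bar> * 1" by (intro mult_left_mono) auto
        then have "\<bar>k * L * a\<bar> \<ge> \<bar>k\<bar>" by (simp add: abs_mult mult.assoc)
        then have "\<bar>ob k (i - 2)\<bar> \<ge> \<bar>k\<bar> - \<bar>l0 (i - 2)\<bar>" using coords[of k] by linarith
        moreover have "\<bar>k\<bar> \<ge> R + \<bar>l0 (i - 2)\<bar>" using that unfolding K_def by linarith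
        ultimately have "R \<le> \<bar>ob k (i - 2)\<bar>" by linarith
        then show ?thesis unfolding v_def by (rule R)
      qed
      have "Pos + G 0 + Neg = V (- int K - 1) - V (int K)" by (rule key[OF GV KN])
      also have "norm \<dots> \<le> norm (V (- int K - 1)) + norm (V (int K))" by (rule norm_triangle_ineq4)
      also have "\<dots> = norm (v (- int K - 1)) + norm (v (int K))" unfolding V_def by (simp add: norm_mult)
      also have "\<dots> \<le> \<epsilon> + \<epsilon>" by (intro add_mono big) auto
      finally show ?thesis by simp
    qed
    note allb = this
    show "Pos + G 0 + Neg = 0"
    proof (rule ccontr)
      assume ne: "Pos + G 0 + Neg \<noteq> 0"
      then have np: "norm (Pos + G 0 + Neg) > 0" by simp
      have "norm (Pos + G 0 + Neg) \<le> 2 * (norm (Pos + G 0 + Neg) / 4)"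
        by (rule allb) (use np in simp)
      then show False using np by simp
    qed
  next
    assume T0: "Pos + G 0 + Neg = 0"
    define V where "V k = (if k \<ge> 0 then Pos - (\<Sum>j=1..nat k. G (int j))
                           else Pos + G 0 + (\<Sum>j=1..nat (-k) - 1. G (- int j)))" for k
    have GV: "G (k + 1) = V k - V (k + 1)" for k
    proof (cases "k \<ge> 0")
      case True
      then have "nat (k + 1) = Suc (nat k)" by simp
      then show ?thesis unfolding V_def using True by (simp add: add.commute)
    next
      case False
      show ?thesis
      proof (cases "k = -1")
        case True then show ?thesis unfolding V_def by simp
      next
        case False
        define m where "m = nat (- (k + 1)) - 1"
        have m: "nat (-k) - 1 = Suc m" "k + 1 = - int (Suc m)" "nat (- (k + 1)) - 1 = m" "\<not> k + 1 \<ge> 0"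
          using False \<open>\<not> k \<ge> 0\<close> unfolding m_def by auto
        have V1: "V k = Pos + G 0 + (\<Sum>j=1..Suc m. G (- int j))" unfolding V_def using m \<open>\<not> k \<ge> 0\<close> by simp
        have V2: "V (k + 1) = Pos + G 0 + (\<Sum>j=1..m. G (- int j))" unfolding V_def using m by simp
        have g1: "G (k + 1) = G (- int (Suc m))" unfolding m(2) ..
        show ?thesis unfolding V1 V2 g1 by simp
      qed
    qed
    have Vz: "V k = 0" if "int N \<le> k \<or> k \<le> - int N" for k
    proof (cases "k \<ge> 0")
      case True
      then have "N \<le> nat k" using that by auto
      then show ?thesis unfolding V_def using True Spos by (simp add: Pos_def[symmetric])
    next
      case False
      then have "N \<le> (nat (-k) - 1) + 1" using that by auto
      then show ?thesis unfolding V_def using False Sneg T0 by simp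
    qed
    define v where "v k = V k * e (sig \<beta> k)" for k
    have vz: "v k = 0" if "int N \<le> k \<or> k \<le> - int N" for k
      unfolding v_def using Vz[OF that] by simp
    have relv: "c (ob k) = e (\<beta> (k - 1)) * v (k - 1) - v k" for k
    proof -
      have g: "G k = V (k - 1) - V k" using GV[of "k - 1"] by simp
      have s: "sig \<beta> k = sig \<beta> (k - 1) + \<beta> (k - 1)" using sig_step[of \<beta> "k - 1"] by simp
      have "c (ob k) = G k * e (sig \<beta> k)"
        unfolding G_def using e_minus[of "sig \<beta> k"] by (simp add: mult.assoc)
      also have "\<dots> = e (\<beta> (k - 1)) * v (k - 1) - v k"
        unfolding g v_def s e_add by (simp add: algebra_simps)
      finally show ?thesis .
    qed
    define I where "I = {- int N .. int N}"
    have Ifin: "finite I" unfolding I_def by simp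
    define u where "u y = (\<Sum>k\<in>I. v k * e (dotr i (ob k) y))" for y
    have tu: "torus_fun i u" unfolding u_def[abs_def] by (rule esum_torus) (rule ob_supp)
    have su: "smooth_in i u" unfolding u_def[abs_def] by (rule esum_smooth[OF Ifin])
    have ident: "\<Psi> y = u (Tlift i A b y) - u y" for y
    proof -
      define f where "f k = e (\<beta> (k - 1)) * v (k - 1) * e (dotr i (ob k) y)" for k
      have "u (Tlift i A b y) = (\<Sum>k\<in>I. f (k + 1))"
        unfolding u_def f_def
      proof (intro sum.cong refl)
        fix k
        have "dotr i (ob k) (Tlift i A b y) = dotr i (ob (k + 1)) y + \<beta> k"
          unfolding dotr_Tlift ob_step \<beta>_def ..
        then show "v k * e (dotr i (ob k) (Tlift i A b y)) = e (\<beta> (k + 1 - 1)) * v (k + 1 - 1) * e (dotr i (ob (k + 1)) y)"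
          by (simp add: e_add)
      qed
      also have "\<dots> = (\<Sum>k\<in>(\<lambda>k. k + 1) ` I. f k)"
        by (subst sum.reindex) (auto simp: inj_on_def)
      also have "(\<lambda>k. k + 1) ` I = insert (int N + 1) {- int N + 1 .. int N}"
        unfolding I_def by (auto simp: image_iff intro!: bexI[of _ "x - 1" for x])
      also have "(\<Sum>k\<in>insert (int N + 1) {- int N + 1 .. int N}. f k) = (\<Sum>k\<in>{- int N + 1 .. int N}. f k)"
        by (simp add: f_def vz)
      also have "\<dots> = (\<Sum>k\<in>insert (- int N) {- int N + 1 .. int N}. f k)"
        by (simp add: f_def vz)
      also have "insert (- int N) {- int N + 1 .. int N} = I" unfolding I_def by auto
      finally have uT: "u (Tlift i A b y) = (\<Sum>k\<in>I. f k)" .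
      have "u (Tlift i A b y) - u y = (\<Sum>k\<in>I. f k) - (\<Sum>k\<in>I. v k * e (dotr i (ob k) y))"
        by (simp only: uT) (simp add: u_def)
      also have "\<dots> = (\<Sum>k\<in>I. c (ob k) * e (dotr i (ob k) y))"
        unfolding sum_subtractf[symmetric] f_def relv by (simp add: algebra_simps)
      also have "\<dots> = (\<Sum>k\<in>{k\<in>I. c (ob k) \<noteq> 0}. c (ob k) * e (dotr i (ob k) y))"
        by (rule sum.mono_neutral_right) (auto simp: Ifin)
      also have "\<dots> = (\<Sum>l\<in>ob ` {k\<in>I. c (ob k) \<noteq> 0}. c l * e (dotr i l y))"
        by (subst sum.reindex) (use ob_inj in \<open>auto simp: inj_on_def inj_def\<close>)
      also have "ob ` {k\<in>I. c (ob k) \<noteq> 0} = S"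
      proof
        show "ob ` {k \<in> I. c (ob k) \<noteq> 0} \<subseteq> S" unfolding S_def omega by auto
        show "S \<subseteq> ob ` {k \<in> I. c (ob k) \<noteq> 0}"
        proof
          fix l assume "l \<in> S"
          then obtain k where k: "l = ob k" "c (ob k) \<noteq> 0" unfolding S_def omega by auto
          then have "\<bar>k\<bar> < int N" using cN by force
          then have "k \<in> I" unfolding I_def by auto
          then show "l \<in> ob ` {k \<in> I. c (ob k) \<noteq> 0}" using k by auto
        qed
      qed
      finally show ?thesis using Psi_def unfolding S_def by simp
    qed
    show "smooth_coboundary i A b \<Psi>"
      unfolding smooth_coboundary_def using tu su ident by blast
  qed
qed


end
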